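(* Let $f \colon \mathbb{R} \to \mathbb{R}$ be given by $f(x) = \ln\big(\frac{\sinh x}{x}\big) - \frac{x^2}{6}$ for $x \neq 0$ and $f(0) = 0$. Then $f$ is continuous on $\mathbb{R}$, is even, and is strictly decreasing on $[0,+\infty)$. Consequently, the mapping $[0,+\infty) \ni x \mapsto x f(x)$ is subadditive, i.e. $(x+y)f(x+y) \le x f(x) + y f(y)$ for all $x,y \ge 0$. *)

theory Defs
  imports "HOL-Analysis.Analysis"
begin

definition sinh_log_fun :: "real \<Rightarrow> real" where
  "sinh_log_fun x = (if x = 0 then 0 else ln (sinh x / x) - x^2 / 6)"

end

theory Submission
  imports Defs
begin

lemma h_pos: "x > 0 \<Longrightarrow> x * cosh x - sinh x > (0::real)"
proof -
  assume x: "x > 0"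
  have "(\<lambda>t. t * cosh t - sinh t) 0 < (\<lambda>t. t * cosh t - sinh t) x"
  proof (rule DERIV_pos_imp_increasing_open[OF x])
    fix t :: real assume t: "0 < t" "t < x"
    show "\<exists>y. ((\<lambda>t. t * cosh t - sinh t) has_real_derivative y) (at t) \<and> 0 < y"
      by (rule exI[of _ "t * sinh t"], intro conjI)
         (auto intro!: derivative_eq_intros simp: t sinh_real_pos_iff)
  next
    show "continuous_on {0..x} (\<lambda>t. t * cosh t - sinh t)"
      by (intro continuous_intros)
  qed
  then show ?thesis by simp
qed

lemma g_pos: "x > 0 \<Longrightarrow> x^2 * sinh x - 3 * x * cosh x + 3 * sinh x > (0::real)"
proof -
  assume x: "x > 0"
  have "(\<lambda>t. t^2 * sinh t - 3 * t * cosh t + 3 * sinh t) 0 < (\<lambda>t. t^2 * sinh t - 3 * t * cosh t + 3 * sinh t) x"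
  proof (rule DERIV_pos_imp_increasing_open[OF x])
    fix t :: real assume t: "0 < t" "t < x"
    have "((\<lambda>t. t^2 * sinh t - 3 * t * cosh t + 3 * sinh t) has_real_derivative t * (t * cosh t - sinh t)) (at t)"
      by (auto intro!: derivative_eq_intros simp: algebra_simps power2_eq_square)
    moreover have "t * (t * cosh t - sinh t) > 0" using h_pos[of t] t by simp
    ultimately show "\<exists>y. ((\<lambda>t. t^2 * sinh t - 3 * t * cosh t + 3 * sinh t) has_real_derivative y) (at t) \<and> 0 < y"
      by blast
  next
    show "continuous_on {0..x} (\<lambda>t. t^2 * sinh t - 3 * t * cosh t + 3 * sinh t)"
      by (intro continuous_intros)
  qed
  then show ?thesis by simp
qed

lemma ratio_pos: "x \<noteq> 0 \<Longrightarrow> sinh x / x > (0::real)"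
  by (cases "x > 0") (auto simp: sinh_real_pos_iff sinh_real_neg_iff divide_neg_neg zero_less_divide_iff)

lemma f_deriv:
  assumes x: "x \<noteq> 0"
  shows "(sinh_log_fun has_real_derivative
           (cosh x * x - sinh x) / x^2 / (sinh x / x) - 2 * x / 6) (at x)"
proof -
  have d: "((\<lambda>t. ln (sinh t / t) - t^2/6) has_real_derivative
           (cosh x * x - sinh x) / x^2 / (sinh x / x) - 2 * x / 6) (at x)"
    using x ratio_pos[OF x]
    by (auto intro!: derivative_eq_intros simp: power2_eq_square)
  have ev: "\<forall>\<^sub>F t in nhds x. sinh_log_fun t = ln (sinh t / t) - t^2/6"
  proof -
    have "\<forall>\<^sub>F t in nhds x. t \<noteq> 0" using x by (simp add: eventually_nhds_in_open t1_space_nhds)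
    then show ?thesis by eventually_elim (simp add: sinh_log_fun_def)
  qed
  show ?thesis
    using DERIV_cong_ev[OF refl ev refl] d by simp
qed

lemma f_deriv_neg:
  assumes x: "x > 0"
  shows "(cosh x * x - sinh x) / x^2 / (sinh x / x) - 2 * x / 6 < (0::real)"
proof -
  have s: "sinh x > 0" using x by (simp add: sinh_real_pos_iff)
  have e: "(cosh x * x - sinh x) / x^2 / (sinh x / x) = (x * cosh x - sinh x) / (x * sinh x)"
    using x s by (simp add: field_simps power2_eq_square)
  have "3 * (x * cosh x - sinh x) < x^2 * sinh x" using g_pos[OF x] by simp
  hence "(x * cosh x - sinh x) / (x * sinh x) < x / 3"
    using x s by (simp add: field_simps power2_eq_square)
  thus ?thesis using e by simp
qed

lemma f_cont: "continuous_on UNIV sinh_log_fun"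
proof -
  have "isCont sinh_log_fun x" for x
  proof (cases "x = 0")
    case False
    then show ?thesis using f_deriv DERIV_isCont by blast
  next
    case True
    have lim: "((\<lambda>x::real. ln (sinh x / x) - x^2/6) \<longlongrightarrow> 0) (at 0)"
    proof -
      have "(sinh has_real_derivative cosh 0) (at (0::real))"
        by (auto intro!: derivative_eq_intros)
      hence "((\<lambda>y. (sinh y - sinh 0) / (y - 0)) \<longlongrightarrow> (1::real)) (at 0)"
        by (simp add: has_field_derivative_iff)
      hence q: "((\<lambda>y. sinh y / y) \<longlongrightarrow> (1::real)) (at 0)" by simp
      have l1: "((\<lambda>x::real. ln (sinh x / x)) \<longlongrightarrow> ln 1) (at 0)"
        by (rule tendsto_ln[OF q]) simp
      have l2: "((\<lambda>x::real. x^2/6) \<longlongrightarrow> 0^2/6) (at 0)"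
        by (intro tendsto_intros) auto
      from tendsto_diff[OF l1 l2] show ?thesis by simp
    qed
    have "(sinh_log_fun \<longlongrightarrow> 0) (at 0)"
      by (rule Lim_transform_within[OF lim zero_less_one]) (simp add: sinh_log_fun_def)
    then show ?thesis using True by (simp add: isCont_def sinh_log_fun_def)
  qed
  then show ?thesis by (simp add: continuous_on_eq_continuous_at)
qed

lemma f_even: "sinh_log_fun (- x) = sinh_log_fun x"
  by (simp add: sinh_log_fun_def)

lemma f_dec: assumes "0 \<le> x" "x < y" shows "sinh_log_fun y < sinh_log_fun x"
proof (rule DERIV_neg_imp_decreasing_open[OF assms(2)])
  fix t assume "x < t" "t < y"
  then have t: "t > 0" using assms by simp
  then show "\<exists>d. (sinh_log_fun has_real_derivative d) (at t) \<and> d < 0"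
    using f_deriv[of t] f_deriv_neg[OF t] by auto
next
  show "continuous_on {x..y} sinh_log_fun" by (rule continuous_on_subset[OF f_cont]) simp
qed

theorem mainTheorem2:
  shows "continuous_on UNIV sinh_log_fun
    \<and> (\<forall>x. sinh_log_fun (- x) = sinh_log_fun x)
    \<and> (\<forall>x y. 0 \<le> x \<longrightarrow> x < y \<longrightarrow> sinh_log_fun y < sinh_log_fun x)
    \<and> (\<forall>x y. 0 \<le> x \<longrightarrow> 0 \<le> y \<longrightarrow>
         (x + y) * sinh_log_fun (x + y) \<le> x * sinh_log_fun x + y * sinh_log_fun y)"
proof (intro conjI allI impI)
  fix x y :: real assume x: "0 \<le> x" and y: "0 \<le> y"
  have "sinh_log_fun (x + y) \<le> sinh_log_fun x"
    using f_dec[of x "x+y"] x y by (cases "y = 0") auto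
  moreover have "sinh_log_fun (x + y) \<le> sinh_log_fun y"
    using f_dec[of y "x+y"] x y by (cases "x = 0") auto
  ultimately have "x * sinh_log_fun (x + y) \<le> x * sinh_log_fun x"
    "y * sinh_log_fun (x + y) \<le> y * sinh_log_fun y"
    using x y mult_left_mono by blast+
  thus "(x + y) * sinh_log_fun (x + y) \<le> x * sinh_log_fun x + y * sinh_log_fun y"
    by (simp add: distrib_right)
qed (auto simp: f_cont f_even f_dec)

end
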